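(* For every integer $n\ge1$ and every $0<\varepsilon\le\frac1{4n}$, \[ \mathbf{T}^\varepsilon_n\le 2(n+1)\,\varepsilon^2\,\Big\|\frac{\partial u_1}{\partial x_2}\Big\|^2_{L^\infty([1,4]\times\{1\})}. \]
   Context: Hersch's pipe is $\mathbf{H}=\{(x_1,x_2):x_1^2+x_2^2<1,\ x_1<0\}\cup\{(x_1,x_2):0<|x_2|<1,\ x_1\ge0\}\subseteq\mathbb{R}^2$; $u_1\in W^{1,2}_0(\mathbf{H})$ is its positive, $L^2$-normalized first Dirichlet eigenfunction (it exists, is $C^2$ up to the flat boundary piece $(0,\infty)\times\{1\}$, and $\partial u_1/\partial x_2$ has a continuous trace there). For $n\ge1$, $0<\varepsilon<1/(2n)$ and $i=0,\dots,n$: $\Sigma^\varepsilon_i=(2+\tfrac in-\varepsilon,2+\tfrac in+\varepsilon)$, $T^\varepsilon_i=\Sigma^\varepsilon_i\times[1,2)$, $\Gamma^\varepsilon_n=\bigcup_{i=0}^n(\Sigma^\varepsilon_i\times\{1\})$, $\mathbf{H}^\varepsilon_n=\mathbf{H}\cup\bigcup_{i=0}^nT^\varepsilon_i$, and \[ \mathbf{T}^\varepsilon_n=\sup_{\varphi\in C^\infty_0(\mathbf{H}^\varepsilon_n)}\Big\{2\int_{\Gamma^\varepsilon_n}\frac{\partial u_1}{\partial x_2}\varphi\,d\mathcal{H}^1-\int_{\mathbf{H}^\varepsilon_n}|\nabla\varphi|^2dx\Big\}. \] *)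

theory Defs
  imports "HOL-Analysis.Analysis" "HOL-Probability.Essential_Supremum"
begin

type_synonym pt = "real \<times> real"

definition Hpipe :: "pt set" where
  "Hpipe = {(x1, x2). x1^2 + x2^2 < 1 \<and> x1 < 0} \<union> {(x1, x2). 0 < \<bar>x2\<bar> \<and> \<bar>x2\<bar> < 1 \<and> x1 \<ge> 0}"

definition Sigma_eps :: "nat \<Rightarrow> real \<Rightarrow> nat \<Rightarrow> real set" where
  "Sigma_eps n \<epsilon> i = {2 + real i / real n - \<epsilon> <..< 2 + real i / real n + \<epsilon>}"

definition T_eps :: "nat \<Rightarrow> real \<Rightarrow> nat \<Rightarrow> pt set" where
  "T_eps n \<epsilon> i = Sigma_eps n \<epsilon> i \<times> {1..<2}"

definition H_eps :: "nat \<Rightarrow> real \<Rightarrow> pt set" where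
  "H_eps n \<epsilon> = Hpipe \<union> (\<Union>i\<in>{0..n}. T_eps n \<epsilon> i)"

fun dder :: "pt list \<Rightarrow> (pt \<Rightarrow> real) \<Rightarrow> pt \<Rightarrow> real" where
  "dder [] f = f"
| "dder (v # vs) f = (\<lambda>x. frechet_derivative (dder vs f) (at x) v)"

definition smooth_fun :: "(pt \<Rightarrow> real) \<Rightarrow> bool" where
  "smooth_fun f \<longleftrightarrow> (\<forall>vs x. dder vs f differentiable (at x))"

definition test_fun :: "pt set \<Rightarrow> (pt \<Rightarrow> real) \<Rightarrow> bool" where
  "test_fun U f \<longleftrightarrow> smooth_fun f \<and> compact (closure {x. f x \<noteq> 0}) \<and> closure {x. f x \<noteq> 0} \<subseteq> U"

definition grad :: "(pt \<Rightarrow> real) \<Rightarrow> pt \<Rightarrow> pt" where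
  "grad f x = (frechet_derivative f (at x) (1, 0), frechet_derivative f (at x) (0, 1))"

definition sqn :: "pt \<Rightarrow> real" where
  "sqn v = (fst v)^2 + (snd v)^2"

text \<open>\<open>u \<in> W\<^sup>1\<^sup>,\<^sup>2\<^sub>0(U)\<close> with weak gradient \<open>g\<close>: \<open>u\<close> is the \<open>W\<^sup>1\<^sup>,\<^sup>2\<close>-limit
  of test functions in \<open>C\<^sub>0\<^sup>\<infinity>(U)\<close>, with gradients converging in \<open>L\<^sup>2\<close> to \<open>g\<close>.\<close>
definition W012 :: "pt set \<Rightarrow> (pt \<Rightarrow> real) \<Rightarrow> (pt \<Rightarrow> pt) \<Rightarrow> bool" where
  "W012 U u g \<longleftrightarrow>
     u \<in> borel_measurable lborel \<and> g \<in> borel_measurable lborel \<and>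
     integrable lborel (\<lambda>x. (u x)^2) \<and> integrable lborel (\<lambda>x. sqn (g x)) \<and>
     (\<exists>\<phi>. (\<forall>k. test_fun U (\<phi> k)) \<and>
        (\<lambda>k. \<integral>x. (\<phi> k x - u x)^2 \<partial>lborel) \<longlonglongrightarrow> 0 \<and>
        (\<lambda>k. \<integral>x. sqn (grad (\<phi> k) x - g x) \<partial>lborel) \<longlonglongrightarrow> 0)"

definition first_dirichlet_eigenvalue :: "pt set \<Rightarrow> real" where
  "first_dirichlet_eigenvalue U = (INF w\<in>{w. test_fun U w \<and> (\<exists>x. w x \<noteq> 0)}.
      (\<integral>x. sqn (grad w x) \<partial>lborel) / (\<integral>x. (w x)^2 \<partial>lborel))"

text \<open>\<open>u\<close> (with weak gradient \<open>g\<close>) is the positive, \<open>L\<^sup>2\<close>-normalised first Dirichlet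
  eigenfunction of \<open>U\<close>; the representative is the continuous one on \<open>U\<close>, extended by 0.\<close>
definition first_dirichlet_eigenfunction :: "pt set \<Rightarrow> (pt \<Rightarrow> real) \<Rightarrow> (pt \<Rightarrow> pt) \<Rightarrow> bool" where
  "first_dirichlet_eigenfunction U u g \<longleftrightarrow>
     W012 U u g \<and>
     continuous_on U u \<and> (\<forall>x\<in>U. u x > 0) \<and> (\<forall>x. x \<notin> U \<longrightarrow> u x = 0) \<and>
     (\<integral>x. (u x)^2 \<partial>lborel) = 1 \<and>
     (\<forall>\<psi>. test_fun U \<psi> \<longrightarrow>
        (\<integral>x. g x \<bullet> grad \<psi> x \<partial>lborel) =
        first_dirichlet_eigenvalue U
        * (\<integral>x. u x * \<psi> x \<partial>lborel))"

text \<open>Trace of \<open>\<partial>u/\<partial>x\<^sub>2\<close> on the flat boundary piece \<open>x\<^sub>2 = 1\<close> (derivative from below).\<close>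
definition dtrace :: "(pt \<Rightarrow> real) \<Rightarrow> real \<Rightarrow> real" where
  "dtrace u x1 = (THE d. ((\<lambda>t. u (x1, t)) has_real_derivative d) (at_left 1))"

definition Gamma_eps :: "nat \<Rightarrow> real \<Rightarrow> real set" where
  "Gamma_eps n \<epsilon> = (\<Union>i\<in>{0..n}. Sigma_eps n \<epsilon> i)"

text \<open>The torsion-like quantity \<open>\<T>\<^sup>\<epsilon>\<^sub>n\<close>; the boundary integral over
  \<open>\<Gamma> = \<Gamma>_eps \<times> {1}\<close> w.r.t. \<open>\<H>\<^sup>1\<close> is the Lebesgue integral in \<open>x\<^sub>1\<close>.\<close>
definition Tors :: "(pt \<Rightarrow> real) \<Rightarrow> nat \<Rightarrow> real \<Rightarrow> ereal" where
  "Tors u n \<epsilon> = (SUP \<phi>\<in>{\<phi>. test_fun (H_eps n \<epsilon>) \<phi>}.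
      ereal (2 * (LINT x1:Gamma_eps n \<epsilon>|lborel. dtrace u x1 * \<phi> (x1, 1))
             - (\<integral>x. sqn (grad \<phi> x) \<partial>lborel)))"

definition Linf_norm_14 :: "(real \<Rightarrow> real) \<Rightarrow> ereal" where
  "Linf_norm_14 f = esssup (restrict_space lborel {1..4}) (\<lambda>t. ereal \<bar>f t\<bar>)"

end

theory Submission
  imports Defs
begin


lemma ftc_real:
  fixes f f' :: "real \<Rightarrow> real"
  assumes "a \<le> b" "\<And>x. x \<in> {a..b} \<Longrightarrow> (f has_real_derivative f' x) (at x)"
  shows "(f' has_integral (f b - f a)) {a..b}"
  apply (rule fundamental_theorem_of_calculus[OF assms(1)])
  using assms(2) by (auto simp: has_real_derivative_iff_has_vector_derivative intro: has_vector_derivative_at_within)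

lemma poincare1:
  fixes f f' :: "real \<Rightarrow> real"
  assumes e: "0 < e"
    and d: "\<And>x. x \<in> {c-e..c+e} \<Longrightarrow> (f has_real_derivative f' x) (at x)"
    and cf': "continuous_on {c-e..c+e} f'"
    and z1: "f (c-e) = 0" and z2: "f (c+e) = 0"
  shows "integral {c-e..c+e} (\<lambda>x. (f x)^2 / e^2) \<le> integral {c-e..c+e} (\<lambda>x. (f' x)^2)"
proof -
  define T where "T x = tan ((x - c)/e)" for x
  define S where "S x = inverse ((cos ((x - c)/e))^2)" for x
  define D where "D x = S x / e^2 * (f x)^2 + T x / e * (2 * f x * f' x)" for x
  have cpos: "cos ((x - c)/e) > 0" if "x \<in> {c-e..c+e}" for x
  proof -
    have y: "-1 \<le> (x-c)/e \<and> (x-c)/e \<le> 1" using that e by (auto simp: field_simps)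
    have "1 < pi/2" using pi_gt3 by simp
    hence "-(pi/2) < (x-c)/e \<and> (x-c)/e < pi/2" using y by linarith
    thus ?thesis by (intro cos_gt_zero_pi) auto
  qed
  have hd: "((\<lambda>x. T x / e * (f x)^2) has_real_derivative D x) (at x)" if "x \<in> {c-e..c+e}" for x
  proof -
    have t: "(tan has_real_derivative S x) (at ((x-c)/e))"
      unfolding S_def using cpos[OF that] by (intro DERIV_tan) simp
    have t2: "(T has_real_derivative S x * (1/e)) (at x)"
      by (unfold T_def, rule DERIV_chain2[of tan _ "\<lambda>x. (x - c)/e", OF t]) (use e in \<open>auto intro!: derivative_eq_intros\<close>)
    show ?thesis unfolding D_def
      using e by (auto intro!: derivative_eq_intros t2 d[OF that] simp: field_simps power2_eq_square)
  qed
  have D0: "(D has_integral 0) {c-e..c+e}"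
    using ftc_real[of "c-e" "c+e" "\<lambda>x. T x / e * (f x)^2" D] hd e z1 z2 by simp
  have fc: "continuous_on {c-e..c+e} f"
    using d by (meson DERIV_isCont continuous_at_imp_continuous_on)
  have ptw: "(f x)^2 / e^2 \<le> (f' x)^2 + D x" if "x \<in> {c-e..c+e}" for x
  proof -
    have cne: "cos ((x-c)/e) \<noteq> 0" using cpos[OF that] by simp
    have "S x = 1 + (T x)^2" unfolding S_def T_def using cne
      by (simp add: tan_def field_simps sin_squared_eq)
    hence "(f' x)^2 + D x - (f x)^2 / e^2 = (f' x + T x * f x / e)^2"
      unfolding D_def using e by (simp add: field_simps power2_eq_square)
    thus ?thesis by (smt (verit) zero_le_power2)
  qed
  have i1: "((\<lambda>x. (f x)^2 / e^2) has_integral integral {c-e..c+e} (\<lambda>x. (f x)^2 / e^2)) {c-e..c+e}"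
    by (intro integrable_integral integrable_continuous_interval) (use e fc in \<open>auto intro!: continuous_intros\<close>)
  have i2: "((\<lambda>x. (f' x)^2 + D x) has_integral (integral {c-e..c+e} (\<lambda>x. (f' x)^2) + 0)) {c-e..c+e}"
    by (intro has_integral_add D0 integrable_integral integrable_continuous_interval continuous_intros cf')
  show ?thesis using has_integral_le[OF i1 i2 ptw] by simp
qed

lemma weighted1:
  fixes g g' :: "real \<Rightarrow> real"
  assumes e: "0 < e"
    and d: "\<And>t. t \<in> {1..2} \<Longrightarrow> (g has_real_derivative g' t) (at t)"
    and cg': "continuous_on {1..2} g'"
    and z: "g 2 = 0"
  shows "2 * M * g 1 \<le> integral {1..2} (\<lambda>t. (g' t)^2 + (g t)^2 / e^2) + M^2 * e"
proof -
  define w where "w t = exp (-(t-1)/e)" for t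
  have wd: "(w has_real_derivative (- w t / e)) (at t)" for t
    unfolding w_def using e by (auto intro!: derivative_eq_intros simp: field_simps)
  define G' where "G' t = g' t * w t + g t * (- w t / e)" for t
  have I1: "(G' has_integral (g 2 * w 2 - g 1 * w 1)) {1..2}"
    unfolding G'_def by (rule ftc_real) (auto intro!: derivative_eq_intros d wd)
  have w1: "w 1 = 1" unfolding w_def by simp
  define K where "K t = -(M^2*e) * (w t)^2" for t
  have I2: "((\<lambda>t. 2*M^2*(w t)^2) has_integral (K 2 - K 1)) {1..2}"
  proof -
    have "((\<lambda>t. -(M^2*e) * (2 * w t * (- w t / e))) has_integral (K 2 - K 1)) {1..2}"
      unfolding K_def by (rule ftc_real) (auto intro!: derivative_eq_intros wd)
    moreover have "-(M^2*e) * (2 * w t * (- w t / e)) = 2*M^2*(w t)^2" for t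
      using e by (simp add: field_simps power2_eq_square)
    ultimately show ?thesis by simp
  qed
  have K21: "K 2 - K 1 \<le> M^2 * e" unfolding K_def w1 using e by simp
  have gc: "continuous_on {1..2} g"
    using d by (meson DERIV_isCont continuous_at_imp_continuous_on)
  have I3: "((\<lambda>t. (g' t)^2 + (g t)^2 / e^2) has_integral integral {1..2} (\<lambda>t. (g' t)^2 + (g t)^2 / e^2)) {1..2}"
    by (intro integrable_integral integrable_continuous_interval) (use e gc cg' in \<open>auto intro!: continuous_intros\<close>)
  have ptw: "(-2*M) * G' t \<le> ((g' t)^2 + (g t)^2 / e^2) + 2*M^2*(w t)^2" for t
  proof -
    have "((g' t)^2 + (g t)^2 / e^2) + 2*M^2*(w t)^2 - (-2*M) * G' t = (g' t + M * w t)^2 + (g t / e - M * w t)^2"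
      unfolding G'_def using e by (simp add: field_simps power2_eq_square)
    thus ?thesis by (smt (verit) zero_le_power2)
  qed
  have "(-2*M) * (g 2 * w 2 - g 1 * w 1) \<le> integral {1..2} (\<lambda>t. (g' t)^2 + (g t)^2 / e^2) + (K 2 - K 1)"
    using has_integral_le[OF has_integral_mult_right[OF I1] has_integral_add[OF I3 I2] ptw] by simp
  thus ?thesis using z w1 K21 by simp
qed

lemma fub2:
  fixes f :: "real \<times> real \<Rightarrow> real"
  assumes "continuous_on UNIV f"
  shows "integral (cbox (a,c) (b,d)) f = integral {a..b} (\<lambda>x. integral {c..d} (\<lambda>t. f (x,t)))"
  using integral_prod_continuous[of a c b d f] continuous_on_subset[OF assms] by (simp add: cbox_interval)

lemma swp2:
  fixes f :: "real \<times> real \<Rightarrow> real"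
  assumes "continuous_on UNIV f"
  shows "integral {a..b} (\<lambda>x. integral {c..d} (\<lambda>t. f (x,t))) = integral {c..d} (\<lambda>t. integral {a..b} (\<lambda>x. f (x,t)))"
  using integral_swap_continuous[of a c b d "\<lambda>x t. f (x,t)"] continuous_on_subset[OF assms] by (simp add: cbox_interval)

lemma par1:
  fixes f :: "real \<times> real \<Rightarrow> real"
  assumes "continuous_on UNIV f"
  shows "continuous_on S (\<lambda>x. integral {c..d} (\<lambda>t. f (x,t)))"
  using integral_continuous_on_param[of S c d "\<lambda>x t. f (x,t)"] continuous_on_subset[OF assms] by (simp add: cbox_interval)

lemma par2:
  fixes f :: "real \<times> real \<Rightarrow> real"
  assumes "continuous_on UNIV f"
  shows "continuous_on S (\<lambda>t. integral {a..b} (\<lambda>x. f (x,t)))"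
proof -
  have "continuous_on UNIV (\<lambda>z. f (prod.swap z))"
    by (rule continuous_on_compose2[OF assms continuous_on_swap]) auto
  moreover have "(\<lambda>z. f (prod.swap z)) = (\<lambda>(t,x). f (x,t))" by auto
  ultimately have "continuous_on UNIV (\<lambda>(t,x). f (x,t))" by metis
  thus ?thesis
    using integral_continuous_on_param[of S a b "\<lambda>t x. f (x,t)"] continuous_on_subset by (force simp: cbox_interval)
qed

lemma tower:
  fixes \<phi> p q :: "real \<times> real \<Rightarrow> real"
  assumes e: "0 < e"
    and c\<phi>: "continuous_on UNIV \<phi>" and cp: "continuous_on UNIV p" and cq: "continuous_on UNIV q"
    and dt: "\<And>x t. ((\<lambda>t. \<phi> (x,t)) has_real_derivative q (x,t)) (at t)"
    and dx: "\<And>x t. ((\<lambda>x. \<phi> (x,t)) has_real_derivative p (x,t)) (at x)"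
    and top: "\<And>x. \<phi> (x,2) = 0"
    and sides: "\<And>t. t \<in> {1..2} \<Longrightarrow> \<phi> (c-e,t) = 0 \<and> \<phi> (c+e,t) = 0"
  shows "2 * M * integral {c-e..c+e} (\<lambda>x. \<bar>\<phi> (x,1)\<bar>) \<le> integral (cbox (c-e,1) (c+e,2)) (\<lambda>z. (p z)^2 + (q z)^2) + 2 * M^2 * e^2"
proof -
  have c\<phi>': "continuous_on S (\<lambda>x. \<phi> (x,t))" for S t
    by (rule continuous_on_subset[of UNIV], intro continuous_on_compose2[OF c\<phi>] continuous_intros) auto
  have cq': "continuous_on S (\<lambda>t. q (x,t))" for S x
    by (rule continuous_on_subset[of UNIV], intro continuous_on_compose2[OF cq] continuous_intros) auto
  have cp': "continuous_on S (\<lambda>x. p (x,t))" for S t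
    by (rule continuous_on_subset[of UNIV], intro continuous_on_compose2[OF cp] continuous_intros) auto
  define F where "F z = (q z)^2 + (\<phi> z)^2 / e^2" for z
  have cF: "continuous_on UNIV F" unfolding F_def using e by (intro continuous_intros c\<phi> cq) auto
  define R where "R x = integral {1..2} (\<lambda>t. F (x,t)) + M^2 * e" for x
  have ptw: "2 * M * \<bar>\<phi> (x,1)\<bar> \<le> R x" if "x \<in> {c-e..c+e}" for x
  proof -
    have "2 * M * \<phi> (x,1) \<le> R x"
      using weighted1[of e "\<lambda>t. \<phi> (x,t)" "\<lambda>t. q (x,t)" M] e dt cq' top unfolding R_def F_def by simp
    moreover have "2 * M * (- \<phi> (x,1)) \<le> R x"
    proof -
      have "((\<lambda>t. - \<phi> (x,t)) has_real_derivative - q (x,t)) (at t)" for t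
        using dt by (rule DERIV_minus)
      moreover have "continuous_on {1..2} (\<lambda>t. - q (x,t))" by (intro continuous_intros cq')
      ultimately show ?thesis
        using weighted1[of e "\<lambda>t. - \<phi> (x,t)" "\<lambda>t. - q (x,t)" M] e top unfolding R_def F_def by simp
    qed
    ultimately show ?thesis by (auto simp: abs_if)
  qed
  have "integral {c-e..c+e} (\<lambda>x. 2 * M * \<bar>\<phi> (x,1)\<bar>) \<le> integral {c-e..c+e} R"
    by (intro integral_le integrable_continuous_interval ptw)
       (auto simp: R_def intro!: continuous_intros c\<phi>' par1 cF)
  also have "integral {c-e..c+e} R = integral {c-e..c+e} (\<lambda>x. integral {1..2} (\<lambda>t. F (x,t))) + 2 * M^2 * e^2"
    unfolding R_def using e
    by (subst integral_add) (auto intro!: integrable_continuous_interval par1 cF simp: power2_eq_square)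
  also have "integral {c-e..c+e} (\<lambda>x. integral {1..2} (\<lambda>t. F (x,t))) = integral (cbox (c-e,1) (c+e,2)) F"
    by (rule fub2[OF cF, symmetric])
  also have "\<dots> = integral (cbox (c-e,1) (c+e,2)) (\<lambda>z. (q z)^2) + integral (cbox (c-e,1) (c+e,2)) (\<lambda>z. (\<phi> z)^2 / e^2)"
    unfolding F_def using e
    by (subst integral_add) (auto intro!: integrable_continuous continuous_intros continuous_on_subset[OF c\<phi>] continuous_on_subset[OF cq])
  also have "integral (cbox (c-e,1) (c+e,2)) (\<lambda>z. (\<phi> z)^2 / e^2) \<le> integral (cbox (c-e,1) (c+e,2)) (\<lambda>z. (p z)^2)"
  proof -
    have c1: "continuous_on UNIV (\<lambda>z. (\<phi> z)^2 / e^2)" using e by (intro continuous_intros c\<phi>) auto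
    have c2: "continuous_on UNIV (\<lambda>z. (p z)^2)" by (intro continuous_intros cp)
    have "integral (cbox (c-e,1) (c+e,2)) (\<lambda>z. (\<phi> z)^2 / e^2) = integral {1..2} (\<lambda>t. integral {c-e..c+e} (\<lambda>x. (\<phi> (x,t))^2 / e^2))"
      by (rule trans[OF fub2[OF c1] swp2[OF c1]])
    also have "\<dots> \<le> integral {1..2} (\<lambda>t. integral {c-e..c+e} (\<lambda>x. (p (x,t))^2))"
      by (intro integral_le integrable_continuous_interval par2 c1 c2 poincare1 e dx cp' sides[THEN conjunct1] sides[THEN conjunct2])
    also have "\<dots> = integral (cbox (c-e,1) (c+e,2)) (\<lambda>z. (p z)^2)"
      by (rule sym, rule trans[OF fub2[OF c2] swp2[OF c2]])
    finally show ?thesis .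
  qed
  finally have "integral {c-e..c+e} (\<lambda>x. 2 * M * \<bar>\<phi> (x,1)\<bar>) \<le> integral (cbox (c-e,1) (c+e,2)) (\<lambda>z. (q z)^2) + integral (cbox (c-e,1) (c+e,2)) (\<lambda>z. (p z)^2) + 2 * M^2 * e^2"
    by simp
  moreover have "integral (cbox (c-e,1) (c+e,2)) (\<lambda>z. (p z)^2 + (q z)^2) = integral (cbox (c-e,1) (c+e,2)) (\<lambda>z. (q z)^2) + integral (cbox (c-e,1) (c+e,2)) (\<lambda>z. (p z)^2)"
    by (subst integral_add) (auto intro!: integrable_continuous continuous_intros continuous_on_subset[OF cp] continuous_on_subset[OF cq])
  ultimately show ?thesis by simp
qed



lemma test_props:
  fixes \<phi> :: "real \<times> real \<Rightarrow> real"
  assumes tf: "test_fun U \<phi>"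
  defines "p \<equiv> \<lambda>x. frechet_derivative \<phi> (at x) (1,0)"
      and "q \<equiv> \<lambda>x. frechet_derivative \<phi> (at x) (0,1)"
  shows "continuous_on UNIV \<phi>" "continuous_on UNIV p" "continuous_on UNIV q"
    "\<And>x t. ((\<lambda>t. \<phi> (x,t)) has_real_derivative q (x,t)) (at t)"
    "\<And>x t. ((\<lambda>x. \<phi> (x,t)) has_real_derivative p (x,t)) (at x)"
    "\<And>x. x \<notin> U \<Longrightarrow> \<phi> x = 0"
    "integrable lborel (\<lambda>x. (p x)^2 + (q x)^2)"
proof -
  have sm: "\<And>vs x. dder vs \<phi> differentiable (at x)" and
    K: "compact (closure {x. \<phi> x \<noteq> 0})" and KU: "closure {x. \<phi> x \<noteq> 0} \<subseteq> U"
    using tf unfolding test_fun_def smooth_fun_def by auto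
  have d0: "\<phi> differentiable (at x)" for x using sm[of "[]" x] by simp
  have dp: "p differentiable (at x)" for x using sm[of "[(1,0)]" x] by (simp add: p_def)
  have dq: "q differentiable (at x)" for x using sm[of "[(0,1)]" x] by (simp add: q_def)
  show "continuous_on UNIV \<phi>" using d0
    by (intro continuous_at_imp_continuous_on) (auto intro: differentiable_imp_continuous_within)
  show "continuous_on UNIV p" using dp
    by (intro continuous_at_imp_continuous_on) (auto intro: differentiable_imp_continuous_within)
  show "continuous_on UNIV q" using dq
    by (intro continuous_at_imp_continuous_on) (auto intro: differentiable_imp_continuous_within)
  have fd: "(\<phi> has_derivative frechet_derivative \<phi> (at z)) (at z)" for z
    using d0 frechet_derivative_works by blast
  have lin: "linear (frechet_derivative \<phi> (at z))" for z
    using fd has_derivative_linear by blast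
  show "((\<lambda>t. \<phi> (x,t)) has_real_derivative q (x,t)) (at t)" for x t
  proof -
    have "((\<lambda>s. (x,s)) has_derivative (\<lambda>s. (0,s))) (at t)"
      by (auto intro!: derivative_eq_intros)
    from has_derivative_compose[OF this fd]
    have "((\<lambda>s. \<phi> (x,s)) has_derivative (\<lambda>s. frechet_derivative \<phi> (at (x,t)) (0,s))) (at t)" .
    moreover have "frechet_derivative \<phi> (at (x,t)) (0,s) = q (x,t) * s" for s
      using linear_scale[OF lin[of "(x,t)"], of s "(0,1)"] unfolding q_def by (simp add: mult.commute)
    ultimately show ?thesis unfolding has_field_derivative_def by simp
  qed
  show "((\<lambda>x. \<phi> (x,t)) has_real_derivative p (x,t)) (at x)" for x t
  proof -
    have "((\<lambda>s. (s,t)) has_derivative (\<lambda>s. (s,0))) (at x)"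
      by (auto intro!: derivative_eq_intros)
    from has_derivative_compose[OF this fd]
    have "((\<lambda>s. \<phi> (s,t)) has_derivative (\<lambda>s. frechet_derivative \<phi> (at (x,t)) (s,0))) (at x)" .
    moreover have "frechet_derivative \<phi> (at (x,t)) (s,0) = p (x,t) * s" for s
      using linear_scale[OF lin[of "(x,t)"], of s "(1,0)"] unfolding p_def by (simp add: mult.commute)
    ultimately show ?thesis unfolding has_field_derivative_def by simp
  qed
  show z: "\<phi> x = 0" if "x \<notin> U" for x
  proof (rule ccontr)
    assume "\<phi> x \<noteq> 0"
    hence "x \<in> closure {x. \<phi> x \<noteq> 0}" using closure_subset[of "{x. \<phi> x \<noteq> 0}"] by auto
    thus False using that KU by auto
  qed
  have outK: "frechet_derivative \<phi> (at x) = (\<lambda>_. 0)" if "x \<notin> closure {x. \<phi> x \<noteq> 0}" for x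
  proof -
    have "((\<lambda>_. 0::real) has_derivative (\<lambda>_. 0)) (at x)" by simp
    hence "(\<phi> has_derivative (\<lambda>_. 0)) (at x)"
    proof (rule has_derivative_transform_within_open[of _ _ _ _ "- closure {x. \<phi> x \<noteq> 0}"])
      show "open (- closure {x. \<phi> x \<noteq> 0})" by auto
      show "x \<in> - closure {x. \<phi> x \<noteq> 0}" using that by auto
      fix y assume "y \<in> - closure {x. \<phi> x \<noteq> 0}"
      hence "y \<notin> {x. \<phi> x \<noteq> 0}" using closure_subset[of "{x. \<phi> x \<noteq> 0}"] by auto
      thus "0 = \<phi> y" by simp
    qed
    thus ?thesis using frechet_derivative_at by metis
  qed
  have cF: "continuous_on (closure {x. \<phi> x \<noteq> 0}) (\<lambda>x. (p x)^2 + (q x)^2)"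
  proof -
    have "continuous_on UNIV (\<lambda>x. (p x)^2 + (q x)^2)"
      using \<open>continuous_on UNIV p\<close> \<open>continuous_on UNIV q\<close> by (intro continuous_intros)
    thus ?thesis using continuous_on_subset by blast
  qed
  have "integrable lborel (\<lambda>x. indicator (closure {x. \<phi> x \<noteq> 0}) x *\<^sub>R ((p x)^2 + (q x)^2))"
    by (rule borel_integrable_compact[OF K cF])
  moreover have "(\<lambda>x. indicator (closure {x. \<phi> x \<noteq> 0}) x *\<^sub>R ((p x)^2 + (q x)^2)) = (\<lambda>x. (p x)^2 + (q x)^2)"
  proof
    fix x show "indicator (closure {x. \<phi> x \<noteq> 0}) x *\<^sub>R ((p x)^2 + (q x)^2) = (p x)^2 + (q x)^2"
      using outK[of x] unfolding p_def q_def by (auto simp: indicator_def)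
  qed
  ultimately show "integrable lborel (\<lambda>x. (p x)^2 + (q x)^2)" by metis
qed



lemma nat_sep_real: "(i::nat) \<noteq> j \<Longrightarrow> 1 \<le> \<bar>real i - real j\<bar>"
proof -
  assume "i \<noteq> j"
  hence "i + 1 \<le> j \<or> j + 1 \<le> i" by linarith
  hence "real i + 1 \<le> real j \<or> real j + 1 \<le> real i"
    by (metis of_nat_1 of_nat_add of_nat_le_iff)
  thus ?thesis by linarith
qed

lemma sep:
  fixes n i j :: nat and \<epsilon> :: real
  assumes n: "n \<ge> 1" and e: "0 < \<epsilon>" "\<epsilon> \<le> 1 / (4 * real n)"
    and h: "\<bar>(2 + real i / real n) - (2 + real j / real n)\<bar> \<le> 2 * \<epsilon>"
  shows "i = j"
proof (rule ccontr)
  assume ij: "i \<noteq> j"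
  define k where "k = real i - real j"
  have np: "real n > 0" using n by simp
  have eq: "(2 + real i / real n) - (2 + real j / real n) = k / real n"
    unfolding k_def by (simp add: diff_divide_distrib)
  have "\<bar>k\<bar> / real n \<le> 2 * \<epsilon>" using h np unfolding eq by (simp add: abs_divide)
  hence k1: "\<bar>k\<bar> \<le> 2 * \<epsilon> * real n" using np by (simp add: divide_le_eq)
  have "\<epsilon> * (4 * real n) \<le> 1" using e(2) np by (simp add: le_divide_eq)
  hence "\<bar>k\<bar> \<le> 1/2" using k1 by linarith
  moreover have "1 \<le> \<bar>k\<bar>" unfolding k_def by (rule nat_sep_real[OF ij])
  ultimately show False by linarith
qed

lemma Hpipe_iff: "(a, b) \<in> Hpipe \<longleftrightarrow> (a^2 + b^2 < 1 \<and> a < 0) \<or> (0 < \<bar>b\<bar> \<and> \<bar>b\<bar> < 1 \<and> a \<ge> 0)"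
  unfolding Hpipe_def by simp

lemma T_iff: "(a, b) \<in> T_eps n \<epsilon> j \<longleftrightarrow> 2 + real j / real n - \<epsilon> < a \<and> a < 2 + real j / real n + \<epsilon> \<and> 1 \<le> b \<and> b < 2"
  unfolding T_eps_def Sigma_eps_def by simp

lemma H_iff: "z \<in> H_eps n \<epsilon> \<longleftrightarrow> z \<in> Hpipe \<or> (\<exists>j\<in>{0..n}. z \<in> T_eps n \<epsilon> j)"
  unfolding H_eps_def by blast

lemma notHpipe: "\<bar>b\<bar> \<ge> 1 \<Longrightarrow> (a, b) \<notin> Hpipe"
proof
  assume b: "\<bar>b\<bar> \<ge> 1" and "(a, b) \<in> Hpipe"
  hence "(a^2 + b^2 < 1 \<and> a < 0) \<or> (0 < \<bar>b\<bar> \<and> \<bar>b\<bar> < 1 \<and> a \<ge> 0)" by (simp only: Hpipe_iff)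
  moreover have "b^2 \<ge> 1"
  proof -
    have "1 \<le> \<bar>b\<bar>^2" by (rule one_le_power[OF b])
    thus ?thesis by simp
  qed
  moreover have "0 \<le> a^2" by simp
  ultimately show False using b by linarith
qed

lemma notH_top: "(x, 2::real) \<notin> H_eps n \<epsilon>"
  using notHpipe[of 2 x] by (simp add: H_iff T_iff)

lemma notH_side:
  fixes n i :: nat and \<epsilon> s t :: real
  assumes n: "n \<ge> 1" and e: "0 < \<epsilon>" "\<epsilon> \<le> 1 / (4 * real n)"
    and t: "t \<in> {1..2}" and s: "\<bar>s\<bar> = \<epsilon>"
  shows "(2 + real i / real n + s, t) \<notin> H_eps n \<epsilon>"
proof -
  have A: "(2 + real i / real n + s, t) \<notin> Hpipe" by (rule notHpipe) (use t in simp)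
  have B:  "(2 + real i / real n + s, t) \<notin> T_eps n \<epsilon> j" for j
  proof
    assume "(2 + real i / real n + s, t) \<in> T_eps n \<epsilon> j"
    hence h0: "2 + real j / real n - \<epsilon> < 2 + real i / real n + s \<and> 2 + real i / real n + s < 2 + real j / real n + \<epsilon>"
      by (simp only: T_iff)
    have "\<bar>(2 + real i / real n) - (2 + real j / real n)\<bar> \<le> 2 * \<epsilon>" using h0 s by linarith
    hence "i = j" by (rule sep[OF n e])
    hence "- \<epsilon> < s \<and> s < \<epsilon>" using h0 by simp
    hence "\<bar>s\<bar> < \<epsilon>" by (simp add: abs_less_iff)
    thus False using s by simp
  qed
  show ?thesis
  proof
    assume "(2 + real i / real n + s, t) \<in> H_eps n \<epsilon>"
    hence "(2 + real i / real n + s, t) \<in> Hpipe \<or> (\<exists>j\<in>{0..n}. (2 + real i / real n + s, t) \<in> T_eps n \<epsilon> j)"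
      by (simp only: H_iff)
    thus False using A B by blast
  qed
qed

lemma in14:
  fixes n j :: nat and \<epsilon> x :: real
  assumes n: "n \<ge> 1" and e: "0 < \<epsilon>" "\<epsilon> \<le> 1 / (4 * real n)" and j: "j \<le> n"
    and x: "x \<in> Sigma_eps n \<epsilon> j"
  shows "x \<in> {1..4}"
proof -
  have np: "real n \<ge> 1" using n by simp
  have "real j / real n \<le> 1" using j np by (simp add: divide_le_eq_1)
  moreover have "real j / real n \<ge> 0" by simp
  moreover have "\<epsilon> \<le> 1/4"
  proof -
    have "1 / (4 * real n) \<le> 1/4" using np by (simp add: field_simps)
    thus ?thesis using e by linarith
  qed
  moreover have "2 + real j / real n - \<epsilon> < x \<and> x < 2 + real j / real n + \<epsilon>" using x by (simp add: Sigma_eps_def)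
  ultimately show ?thesis by (simp only: atLeastAtMost_iff) linarith
qed

lemma core:
  fixes d :: "real \<Rightarrow> real" and \<phi> :: "real \<times> real \<Rightarrow> real" and n :: nat and \<epsilon> M :: real
  assumes n: "n \<ge> 1" and e: "0 < \<epsilon>" "\<epsilon> \<le> 1 / (4 * real n)" and M: "M \<ge> 0"
    and ae: "AE x in lborel. x \<in> {1..4} \<longrightarrow> \<bar>d x\<bar> \<le> M"
    and tf: "test_fun (H_eps n \<epsilon>) \<phi>"
  shows "2 * (LINT x1:Gamma_eps n \<epsilon>|lborel. d x1 * \<phi> (x1, 1)) - (\<integral>x. sqn (grad \<phi> x) \<partial>lborel)
         \<le> 2 * real (n + 1) * \<epsilon>^2 * M^2"
proof -
  define p where "p x = frechet_derivative \<phi> (at x) (1,0)" for x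
  define q where "q x = frechet_derivative \<phi> (at x) (0,1)" for x
  note tp = test_props[OF tf, folded p_def q_def]
  define F where "F x = (p x)^2 + (q x)^2" for x
  have Fsqn: "sqn (grad \<phi> x) = F x" for x unfolding F_def p_def q_def grad_def sqn_def by simp
  have cF: "continuous_on UNIV F" unfolding F_def using tp(2,3) by (intro continuous_intros)
  have Fint: "integrable lborel F" using tp(7) unfolding F_def .
  have F0: "F x \<ge> 0" for x unfolding F_def by simp
  define c where "c i = 2 + real i / real n" for i
  define Q where "Q i = cbox (c i - \<epsilon>, 1::real) (c i + \<epsilon>, 2::real)" for i
  have np: "real n > 0" using n by simp
  have top: "\<phi> (x,2) = 0" for x by (rule tp(6)[OF notH_top])
  have sides: "\<phi> (c i - \<epsilon>, t) = 0 \<and> \<phi> (c i + \<epsilon>, t) = 0" if "t \<in> {1..2}" for i t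
  proof -
    have a: "(2 + real i / real n + (-\<epsilon>), t) \<notin> H_eps n \<epsilon>" by (rule notH_side[OF n e that]) (use e in simp)
    have b: "(2 + real i / real n + \<epsilon>, t) \<notin> H_eps n \<epsilon>" by (rule notH_side[OF n e that]) (use e in simp)
    show ?thesis using tp(6)[OF a] tp(6)[OF b] by (simp add: c_def)
  qed
  have tower_i: "2 * M * integral {c i - \<epsilon>..c i + \<epsilon>} (\<lambda>x. \<bar>\<phi> (x,1)\<bar>) \<le> integral (Q i) F + 2 * M^2 * \<epsilon>^2" for i
    unfolding Q_def F_def using tower[OF e(1) tp(1,2,3,4,5) top sides[of _ i], where M=M] by simp
  have EQ: "integral (Q i) F = (\<integral>x. indicator (Q i) x *\<^sub>R F x \<partial>lborel)" for i
  proof -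
    have "set_integrable lborel (Q i) F" unfolding set_integrable_def Q_def
      by (rule borel_integrable_compact) (auto intro: continuous_on_subset[OF cF])
    from set_borel_integral_eq_integral(2)[OF this] show ?thesis
      unfolding set_lebesgue_integral_def by simp
  qed
  have Qint: "integrable lborel (\<lambda>x. indicator (Q i) x *\<^sub>R F x)" for i
    unfolding Q_def by (rule borel_integrable_compact) (auto intro: continuous_on_subset[OF cF])
  have Qdisj: "i = j" if "x \<in> Q i" "x \<in> Q j" for i j x
  proof -
    have "\<bar>c i - c j\<bar> \<le> 2 * \<epsilon>" using that
      by (cases x) (auto simp: Q_def cbox_Pair_iff abs_le_iff)
    thus ?thesis using sep[OF n e, of i j] by (simp add: c_def)
  qed
  have Esum: "(\<Sum>i\<in>{0..n}. integral (Q i) F) \<le> (\<integral>x. sqn (grad \<phi> x) \<partial>lborel)"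
  proof -
    have "(\<Sum>i\<in>{0..n}. integral (Q i) F) = (\<integral>x. (\<Sum>i\<in>{0..n}. indicator (Q i) x *\<^sub>R F x) \<partial>lborel)"
      unfolding EQ by (rule Bochner_Integration.integral_sum[symmetric]) (rule Qint)
    also have "\<dots> \<le> (\<integral>x. F x \<partial>lborel)"
    proof (rule integral_mono)
      show "integrable lborel (\<lambda>x. \<Sum>i\<in>{0..n}. indicator (Q i) x *\<^sub>R F x)"
        by (rule Bochner_Integration.integrable_sum) (rule Qint)
      show "integrable lborel F" by (rule Fint)
      fix x
      show "(\<Sum>i\<in>{0..n}. indicator (Q i) x *\<^sub>R F x) \<le> F x"
      proof (cases "\<exists>j\<in>{0..n}. x \<in> Q j")
        case True
        then obtain j where j: "j \<in> {0..n}" "x \<in> Q j" by blast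
        have "(\<Sum>i\<in>{0..n}. indicator (Q i) x *\<^sub>R F x) = (\<Sum>i\<in>{0..n}. if i = j then F x else 0)"
        proof (rule sum.cong[OF refl])
          fix i assume "i \<in> {0..n}"
          show "indicator (Q i) x *\<^sub>R F x = (if i = j then F x else 0)"
          proof (cases "i = j")
            case True thus ?thesis using j(2) by simp
          next
            case False
            hence "x \<notin> Q i" using Qdisj[where x=x and j=j] j(2) by blast
            thus ?thesis using False by simp
          qed
        qed
        also have "\<dots> = F x" using j by simp
        finally show ?thesis by (rule eq_refl)
      next
        case False
        hence "(\<Sum>i\<in>{0..n}. indicator (Q i) x *\<^sub>R F x) = 0"
          by (intro sum.neutral) (auto simp: indicator_def)
        thus ?thesis using F0[of x] by linarith
      qed
    qed
    finally show ?thesis unfolding Fsqn .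
  qed
  have E0: "(\<integral>x. sqn (grad \<phi> x) \<partial>lborel) \<ge> 0"
    by (rule Bochner_Integration.integral_nonneg) (simp add: Fsqn F0)
  define G where "G x = d x * \<phi> (x,1)" for x
  have c1: "continuous_on S (\<lambda>x. M * \<bar>\<phi> (x,1)\<bar>)" for S
    by (rule continuous_on_subset[of UNIV]) (intro continuous_intros continuous_on_compose2[OF tp(1)], auto)
  define R where "R x = (\<Sum>i\<in>{0..n}. indicator {c i - \<epsilon>..c i + \<epsilon>} x *\<^sub>R (M * \<bar>\<phi> (x,1)\<bar>))" for x
  have Rint_i: "integrable lborel (\<lambda>x. indicator {c i - \<epsilon>..c i + \<epsilon>} x *\<^sub>R (M * \<bar>\<phi> (x,1)\<bar>))" for i
    by (rule borel_integrable_compact) (auto intro: c1)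
  have Rint: "integrable lborel R" unfolding R_def by (rule Bochner_Integration.integrable_sum) (rule Rint_i)
  have Rval: "(\<integral>x. R x \<partial>lborel) = (\<Sum>i\<in>{0..n}. M * integral {c i - \<epsilon>..c i + \<epsilon>} (\<lambda>x. \<bar>\<phi> (x,1)\<bar>))"
  proof -
    have "(\<integral>x. R x \<partial>lborel) = (\<Sum>i\<in>{0..n}. (\<integral>x. indicator {c i - \<epsilon>..c i + \<epsilon>} x *\<^sub>R (M * \<bar>\<phi> (x,1)\<bar>) \<partial>lborel))"
      unfolding R_def by (rule Bochner_Integration.integral_sum) (rule Rint_i)
    also have "\<dots> = (\<Sum>i\<in>{0..n}. integral {c i - \<epsilon>..c i + \<epsilon>} (\<lambda>x. M * \<bar>\<phi> (x,1)\<bar>))"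
    proof (rule sum.cong[OF refl])
      fix i
      have "set_integrable lborel {c i - \<epsilon>..c i + \<epsilon>} (\<lambda>x. M * \<bar>\<phi> (x,1)\<bar>)"
        unfolding set_integrable_def by (rule Rint_i)
      from set_borel_integral_eq_integral(2)[OF this]
      show "(\<integral>x. indicator {c i - \<epsilon>..c i + \<epsilon>} x *\<^sub>R (M * \<bar>\<phi> (x,1)\<bar>) \<partial>lborel) = integral {c i - \<epsilon>..c i + \<epsilon>} (\<lambda>x. M * \<bar>\<phi> (x,1)\<bar>)"
        unfolding set_lebesgue_integral_def .
    qed
    also have "\<dots> = (\<Sum>i\<in>{0..n}. M * integral {c i - \<epsilon>..c i + \<epsilon>} (\<lambda>x. \<bar>\<phi> (x,1)\<bar>))"
      by simp
    finally show ?thesis .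
  qed
  have Ibound: "2 * (LINT x1:Gamma_eps n \<epsilon>|lborel. G x1) \<le> (\<Sum>i\<in>{0..n}. integral (Q i) F) + 2 * real (n + 1) * \<epsilon>^2 * M^2"
  proof (cases "set_integrable lborel (Gamma_eps n \<epsilon>) G")
    case False
    hence "(LINT x1:Gamma_eps n \<epsilon>|lborel. G x1) = 0"
      unfolding set_integrable_def set_lebesgue_integral_def by (rule not_integrable_integral_eq)
    moreover have "integral (Q i) F \<ge> 0" for i
      unfolding EQ by (rule Bochner_Integration.integral_nonneg) (simp add: F0)
    ultimately show ?thesis using e by (simp add: sum_nonneg)
  next
    case True
    have "(LINT x1:Gamma_eps n \<epsilon>|lborel. G x1) \<le> (\<integral>x. R x \<partial>lborel)"
      unfolding set_lebesgue_integral_def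
    proof (rule integral_mono_AE)
      show "integrable lborel (\<lambda>x. indicator (Gamma_eps n \<epsilon>) x *\<^sub>R G x)"
        using True unfolding set_integrable_def .
      show "integrable lborel R" by (rule Rint)
      show "AE x in lborel. indicator (Gamma_eps n \<epsilon>) x *\<^sub>R G x \<le> R x"
        using ae
      proof (rule eventually_mono)
        fix x assume ax: "x \<in> {1..4} \<longrightarrow> \<bar>d x\<bar> \<le> M"
        have Rnn: "\<forall>i\<in>{0..n}. 0 \<le> indicator {c i - \<epsilon>..c i + \<epsilon>} x *\<^sub>R (M * \<bar>\<phi> (x,1)\<bar>)"
          using M by (auto simp: indicator_def)
        show "indicator (Gamma_eps n \<epsilon>) x *\<^sub>R G x \<le> R x"
        proof (cases "x \<in> Gamma_eps n \<epsilon>")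
          case True
          then obtain j where j: "j \<in> {0..n}" "x \<in> Sigma_eps n \<epsilon> j" unfolding Gamma_eps_def by blast
          have x14: "x \<in> {1..4}" using in14[OF n e _ j(2)] j(1) by simp
          have "G x \<le> \<bar>d x\<bar> * \<bar>\<phi> (x,1)\<bar>" unfolding G_def by (simp add: abs_mult[symmetric])
          also have "\<dots> \<le> M * \<bar>\<phi> (x,1)\<bar>" using ax x14 by (simp add: mult_right_mono)
          also have "\<dots> = indicator {c j - \<epsilon>..c j + \<epsilon>} x *\<^sub>R (M * \<bar>\<phi> (x,1)\<bar>)"
            using j(2) by (simp add: Sigma_eps_def c_def indicator_def)
          also have "\<dots> \<le> R x" unfolding R_def
            by (rule member_le_sum) (use j Rnn in auto)
          finally show ?thesis using True by simp
        next
          case False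
          have "0 \<le> R x" unfolding R_def by (rule sum_nonneg) (use Rnn in blast)
          thus ?thesis using False by simp
        qed
      qed
    qed
    hence "2 * (LINT x1:Gamma_eps n \<epsilon>|lborel. G x1) \<le> 2 * (\<Sum>i\<in>{0..n}. M * integral {c i - \<epsilon>..c i + \<epsilon>} (\<lambda>x. \<bar>\<phi> (x,1)\<bar>))"
      unfolding Rval by simp
    also have "\<dots> = (\<Sum>i\<in>{0..n}. 2 * M * integral {c i - \<epsilon>..c i + \<epsilon>} (\<lambda>x. \<bar>\<phi> (x,1)\<bar>))"
      by (simp add: sum_distrib_left mult.assoc)
    also have "\<dots> \<le> (\<Sum>i\<in>{0..n}. integral (Q i) F + 2 * M^2 * \<epsilon>^2)"
      by (rule sum_mono) (rule tower_i)
    also have "\<dots> = (\<Sum>i\<in>{0..n}. integral (Q i) F) + 2 * real (n + 1) * \<epsilon>^2 * M^2"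
      by (simp add: sum.distrib)
    finally show ?thesis .
  qed
  show ?thesis using Ibound Esum unfolding G_def by linarith
qed



theorem mainTheorem9:
  fixes u :: "real \<times> real \<Rightarrow> real" and g :: "real \<times> real \<Rightarrow> real \<times> real"
    and n :: nat and \<epsilon> :: real
  assumes u: "first_dirichlet_eigenfunction Hpipe u g"
    and trace_ex: "\<forall>x1>0. \<exists>d. ((\<lambda>t. u (x1, t)) has_real_derivative d) (at_left 1)"
    and n: "n \<ge> 1"
    and eps: "0 < \<epsilon>" "\<epsilon> \<le> 1 / (4 * real n)"
  shows "Tors u n \<epsilon> \<le> ereal (2 * real (n + 1) * \<epsilon>^2) * (Linf_norm_14 (dtrace u) * Linf_norm_14 (dtrace u))"
proof -
  define L where "L = Linf_norm_14 (dtrace u)"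
  have ae0: "AE x in restrict_space lborel {1..4}. ereal \<bar>dtrace u x\<bar> \<le> L"
    unfolding L_def Linf_norm_14_def by (rule esssup_AE)
  have ae1: "AE x in lborel. x \<in> {1..4} \<longrightarrow> ereal \<bar>dtrace u x\<bar> \<le> L"
    using ae0 by (subst (asm) AE_restrict_space_iff) auto
  have cpos: "2 * real (n + 1) * \<epsilon>^2 > 0" using eps by simp
  have "Tors u n \<epsilon> \<le> ereal (2 * real (n + 1) * \<epsilon>^2) * (L * L)"
  proof (cases L)
    case (real m)
    have ae: "AE x in lborel. x \<in> {1..4} \<longrightarrow> \<bar>dtrace u x\<bar> \<le> \<bar>m\<bar>"
      using ae1 by (rule eventually_mono) (auto simp: real)
    have "Tors u n \<epsilon> \<le> ereal (2 * real (n + 1) * \<epsilon>^2 * \<bar>m\<bar>^2)"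
      unfolding Tors_def
    proof (rule SUP_least)
      fix \<phi> assume "\<phi> \<in> {\<phi>. test_fun (H_eps n \<epsilon>) \<phi>}"
      hence tf: "test_fun (H_eps n \<epsilon>) \<phi>" by simp
      show "ereal (2 * (LINT x1:Gamma_eps n \<epsilon>|lborel. dtrace u x1 * \<phi> (x1, 1)) - (\<integral>x. sqn (grad \<phi> x) \<partial>lborel))
            \<le> ereal (2 * real (n + 1) * \<epsilon>^2 * \<bar>m\<bar>^2)"
        using core[OF n eps abs_ge_zero ae tf] by simp
    qed
    also have "\<dots> = ereal (2 * real (n + 1) * \<epsilon>^2) * (L * L)"
      by (simp add: real power2_eq_square)
    finally show ?thesis .
  next
    case PInf
    thus ?thesis using cpos eps by simp
  next
    case MInf
    thus ?thesis using cpos eps by simp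
  qed
  thus ?thesis unfolding L_def .
qed

end
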